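(* Let $F(\mathbf{w})=\mathbb{E}_{\mathbf{x}\sim\mathcal{X}}[f(\mathbf{w},\mathbf{x})]$ satisfy (PL) with constant $\alpha>0$, (Smooth) with constant $\beta>0$, and (Bounded variance) with constant $V\ge0$; let $F^*=\min_{\mathbf{w}}F(\mathbf{w})$. Let $S$ be a positive integer and $\eta\in(0,2(S\beta)^{-1})$; define $\gamma=\eta\alpha(2-\eta\beta)$, $\Delta=\frac{1}{2\gamma}\eta^2\beta V$, and $\xi(S)=\frac{2-\eta\beta}{2-S\eta\beta}$. Run scaled SGD at scale $S$ with constant learning rate $\mathrm{lr}(t)=S\eta$ for $T$ iterations from $\mathbf{w}_0$. Then \[ \mathbb{E}[F(\mathbf{w}_T)-F^*]\le\Big(1-\frac{\gamma}{\xi(S)}\Big)^{ST}[F(\mathbf{w}_0)-F^*]+\xi(S)\,\Delta. \]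
   Context: Setting: $\mathcal{X}$ is a distribution over batches; $f(\cdot,\mathbf{x})$ and $F$ are differentiable with $\mathbb{E}_{\mathbf{x}\sim\mathcal{X}}[\nabla_{\mathbf{w}}f(\mathbf{w},\mathbf{x})]=\nabla F(\mathbf{w})$. $\sigma_{\mathbf{g}}^2(\mathbf{w})=\mathrm{tr}\big(\mathrm{cov}_{\mathbf{x}\sim\mathcal{X}}(\nabla_{\mathbf{w}}f(\mathbf{w},\mathbf{x}),\nabla_{\mathbf{w}}f(\mathbf{w},\mathbf{x}))\big)$. (PL): $F(\mathbf{w})-F^*\le\frac1{2\alpha}\|\nabla F(\mathbf{w})\|^2$ for all $\mathbf{w}$. (Smooth): $\|\nabla F(\mathbf{w})-\nabla F(\mathbf{w}')\|\le\beta\|\mathbf{w}-\mathbf{w}'\|$. (Bounded variance): $\sigma_{\mathbf{g}}^2(\mathbf{w})\le V$ for all $\mathbf{w}$. Scaled SGD with scale $S$, schedule $\mathrm{lr}$, $T$ iterations: for $t=0,\dots,T-1$, draw $S$ batches $\mathbf{x}^{(1)},\dots,\mathbf{x}^{(S)}\sim\mathcal{X}$ independently of each other and of the past, set $\bar{\mathbf{g}}_t=\frac1S\sum_{i=1}^S\nabla_{\mathbf{w}}f(\mathbf{w}_t,\mathbf{x}^{(i)})$ and $\mathbf{w}_{t+1}=\mathbf{w}_t-\mathrm{lr}(t)\bar{\mathbf{g}}_t$; output $\mathbf{w}_T$. *)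

theory Defs
  imports "HOL-Probability.Probability"
begin

text \<open>Trace of the covariance of the stochastic gradient at w, written out:
  tr cov(g,g) = E ||g - E g||^2 (as an extended nonnegative real, so that an
  infinite second moment gives infinity).\<close>
definition sigma_g2 :: "'b measure \<Rightarrow> ('a::euclidean_space \<Rightarrow> 'b \<Rightarrow> 'a) \<Rightarrow> 'a \<Rightarrow> ennreal" where
  "sigma_g2 X gf w = (\<integral>\<^sup>+ x. ennreal ((norm (gf w x - (\<integral> y. gf w y \<partial>X)))\<^sup>2) \<partial>X)"

text \<open>Scaled SGD iterate.  The sample omega (t,i) is the i-th batch drawn at iteration t.\<close>
primrec scaled_sgd ::
  "('a::real_vector \<Rightarrow> 'b \<Rightarrow> 'a) \<Rightarrow> nat \<Rightarrow> (nat \<Rightarrow> real) \<Rightarrow> 'a \<Rightarrow> (nat \<times> nat \<Rightarrow> 'b) \<Rightarrow> nat \<Rightarrow> 'a" where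
  "scaled_sgd gf S lr w0 \<omega> 0 = w0"
| "scaled_sgd gf S lr w0 \<omega> (Suc t) =
     (let w = scaled_sgd gf S lr w0 \<omega> t
      in w - lr t *\<^sub>R ((1 / real S) *\<^sub>R (\<Sum>i<S. gf w (\<omega> (t, i)))))"

definition batches :: "nat \<Rightarrow> nat \<Rightarrow> 'b measure \<Rightarrow> (nat \<times> nat \<Rightarrow> 'b) measure" where
  "batches T S X = PiM ({..<T} \<times> {..<S}) (\<lambda>_. X)"

end

theory Submission
  imports Defs
begin

lemma descent:
  fixes F :: "'a::euclidean_space \<Rightarrow> real" and gF :: "'a \<Rightarrow> 'a"
  assumes F_diff: "\<And>w. (F has_derivative (\<lambda>h. gF w \<bullet> h)) (at w)"
    and smooth: "\<And>w w'. norm (gF w - gF w') \<le> \<beta> * norm (w - w')"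
    and bpos: "\<beta> \<ge> 0"
  shows "F v \<le> F w + gF w \<bullet> (v - w) + \<beta> / 2 * (norm (v - w))\<^sup>2"
proof -
  define d where "d = v - w"
  define \<phi> where "\<phi> t = F (w + t *\<^sub>R d) - t * (gF w \<bullet> d) - \<beta> / 2 * t\<^sup>2 * (norm d)\<^sup>2" for t :: real
  have der: "(\<phi> has_real_derivative (gF (w + t *\<^sub>R d) \<bullet> d - gF w \<bullet> d - \<beta> * t * (norm d)\<^sup>2)) (at t)" for t
  proof -
    have l: "((\<lambda>t. w + t *\<^sub>R d) has_derivative (\<lambda>h. h *\<^sub>R d)) (at t)"
      by (auto intro!: derivative_eq_intros)
    have c: "((\<lambda>t. F (w + t *\<^sub>R d)) has_derivative (\<lambda>h. gF (w + t *\<^sub>R d) \<bullet> (h *\<^sub>R d))) (at t)"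
      using has_derivative_compose[OF l F_diff] by simp
    have c': "((\<lambda>t. F (w + t *\<^sub>R d)) has_real_derivative (gF (w + t *\<^sub>R d) \<bullet> d)) (at t)"
      unfolding has_field_derivative_def using c by (simp add: mult.commute[of _ "gF (w + t *\<^sub>R d) \<bullet> d"])
    show ?thesis unfolding \<phi>_def
      by (rule derivative_eq_intros c' | simp)+
  qed
  have "\<phi> 1 \<le> \<phi> 0"
  proof (rule DERIV_nonpos_imp_nonincreasing[of 0 1])
    fix t :: real assume t0: "0 \<le> t" and t1: "t \<le> 1"
    have t: "0 \<le> t \<and> t \<le> 1" using t0 t1 by simp
    have "(gF (w + t *\<^sub>R d) - gF w) \<bullet> d \<le> norm (gF (w + t *\<^sub>R d) - gF w) * norm d"
      by (rule norm_cauchy_schwarz)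
    also have "\<dots> \<le> \<beta> * norm (t *\<^sub>R d) * norm d"
      using smooth[of "w + t *\<^sub>R d" w] by (simp add: mult_right_mono)
    also have "\<dots> = \<beta> * t * (norm d)\<^sup>2" using t by (simp add: power2_eq_square)
    finally show "\<exists>y. DERIV \<phi> t :> y \<and> y \<le> 0" using der[of t]
      by (intro exI[of _ "gF (w + t *\<^sub>R d) \<bullet> d - gF w \<bullet> d - \<beta> * t * (norm d)\<^sup>2"])
         (simp add: inner_diff_left)
  qed simp
  then show ?thesis unfolding \<phi>_def d_def by simp
qed

lemma PiM_comp:
  fixes k :: "'b \<Rightarrow> 'c::{banach,second_countable_topology}"
  assumes X: "prob_space X" and k: "integrable X k" and j: "j \<in> J"
  shows "integrable (PiM J (\<lambda>_. X)) (\<lambda>y. k (y j))"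
    and "(\<integral>y. k (y j) \<partial>PiM J (\<lambda>_. X)) = (\<integral>x. k x \<partial>X)"
proof -
  have D: "distr (PiM J (\<lambda>_. X)) X (\<lambda>\<omega>. \<omega> j) = X"
    by (rule distr_PiM_component) (use X j in auto)
  have m: "(\<lambda>\<omega>. \<omega> j) \<in> PiM J (\<lambda>_. X) \<rightarrow>\<^sub>M X"
    using j by (rule measurable_component_singleton)
  have km: "k \<in> borel_measurable X" using k by simp
  show "integrable (PiM J (\<lambda>_. X)) (\<lambda>y. k (y j))"
    using integrable_distr_eq[OF m km] D k by simp
  show "(\<integral>y. k (y j) \<partial>PiM J (\<lambda>_. X)) = (\<integral>x. k x \<partial>X)"
    using integral_distr[OF m km] D by simp
qed

lemma PiM_prob:
  assumes X: "prob_space X"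
  shows "product_prob_space (\<lambda>_. X)"
  unfolding product_prob_space_def product_prob_space_axioms_def product_sigma_finite_def
  using X prob_space_imp_sigma_finite by blast

lemma PiM_prob_space:
  assumes X: "prob_space X"
  shows "prob_space (PiM J (\<lambda>_. X))"
proof -
  interpret product_prob_space "\<lambda>_. X" J using PiM_prob[OF X] .
  show ?thesis by (rule P.prob_space_axioms)
qed

lemma var_sum:
  fixes u :: "'b \<Rightarrow> 'a::euclidean_space"
  assumes X: "prob_space X" and ui: "integrable X u" and u0: "(\<integral>x. u x \<partial>X) = 0"
    and nui: "integrable X (\<lambda>x. (norm (u x))\<^sup>2)"
    and J: "finite J"
  shows "integrable (PiM J (\<lambda>_. X)) (\<lambda>y. (norm (\<Sum>j\<in>J. u (y j)))\<^sup>2)"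
    and "(\<integral>y. (norm (\<Sum>j\<in>J. u (y j)))\<^sup>2 \<partial>PiM J (\<lambda>_. X)) = real (card J) * (\<integral>x. (norm (u x))\<^sup>2 \<partial>X)"
proof -
  interpret product_prob_space "\<lambda>_. X" J using PiM_prob[OF X] .
  interpret Xp: prob_space X by (rule X)
  let ?M = "PiM J (\<lambda>_. X)"
  have ub: "integrable X (\<lambda>x. u x \<bullet> b)" for b using ui by auto
  have ub0: "(\<integral>x. u x \<bullet> b \<partial>X) = 0" for b using ui u0 by simp
  have ub2: "integrable X (\<lambda>x. (u x \<bullet> b)\<^sup>2)" if b: "b \<in> Basis" for b
  proof (rule Bochner_Integration.integrable_bound[OF nui])
    show "(\<lambda>x. (u x \<bullet> b)\<^sup>2) \<in> borel_measurable X" using ub[of b] by measurable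
    show "AE x in X. norm ((u x \<bullet> b)\<^sup>2) \<le> norm ((norm (u x))\<^sup>2)"
    proof (rule AE_I2)
      fix x
      have "\<bar>u x \<bullet> b\<bar> \<le> norm (u x)" using Basis_le_norm[OF b] by simp
      then have "(u x \<bullet> b)\<^sup>2 \<le> (norm (u x))\<^sup>2"
        by (metis abs_ge_zero power2_abs power_mono)
      then show "norm ((u x \<bullet> b)\<^sup>2) \<le> norm ((norm (u x))\<^sup>2)" by simp
    qed
  qed
  have trm: "integrable ?M (\<lambda>y. (u (y j) \<bullet> b) * (u (y k) \<bullet> b)) \<and>
      (\<integral>y. (u (y j) \<bullet> b) * (u (y k) \<bullet> b) \<partial>?M) = (if j = k then (\<integral>x. (u x \<bullet> b)\<^sup>2 \<partial>X) else 0)"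
    if j: "j \<in> J" and k: "k \<in> J" and b: "b \<in> Basis" for j k b
  proof (cases "j = k")
    case True
    have e: "(\<lambda>y. (u (y j) \<bullet> b) * (u (y k) \<bullet> b)) = (\<lambda>y. (\<lambda>x. (u x \<bullet> b)\<^sup>2) (y j))"
      using True by (simp add: power2_eq_square)
    show ?thesis unfolding e using PiM_comp[OF X ub2[OF b] j] True by simp
  next
    case False
    define f where "f i = (if i = j \<or> i = k then (\<lambda>x. u x \<bullet> b) else (\<lambda>_. 1::real))" for i
    have fi: "integrable X (f i)" for i unfolding f_def using ub[of b] by auto
    have pe: "(\<Prod>i\<in>J. f i (y i)) = (u (y j) \<bullet> b) * (u (y k) \<bullet> b)" for y
    proof -
      have "(\<Prod>i\<in>J. f i (y i)) = (\<Prod>i\<in>{j,k}. f i (y i))"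
        by (rule prod.mono_neutral_right) (use J j k in \<open>auto simp: f_def\<close>)
      also have "\<dots> = (u (y j) \<bullet> b) * (u (y k) \<bullet> b)" using False by (simp add: f_def)
      finally show ?thesis .
    qed
    have "integrable ?M (\<lambda>y. \<Prod>i\<in>J. f i (y i))"
      by (rule product_integrable_prod) (use J fi in auto)
    moreover have "(\<integral>y. (\<Prod>i\<in>J. f i (y i)) \<partial>?M) = (\<Prod>i\<in>J. integral\<^sup>L X (f i))"
      by (rule product_integral_prod) (use J fi in auto)
    moreover have "(\<Prod>i\<in>J. integral\<^sup>L X (f i)) = 0"
      using J j by (intro prod_zero) (auto simp: f_def ub0 intro!: bexI[of _ j])
    ultimately show ?thesis using False by (simp add: pe)
  qed
  have expand: "(norm (\<Sum>j\<in>J. u (y j)))\<^sup>2 = (\<Sum>j\<in>J. \<Sum>k\<in>J. \<Sum>b\<in>Basis. (u (y j) \<bullet> b) * (u (y k) \<bullet> b))" for y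
  proof -
    have "(norm (\<Sum>j\<in>J. u (y j)))\<^sup>2 = (\<Sum>j\<in>J. \<Sum>k\<in>J. u (y j) \<bullet> u (y k))"
      by (simp add: power2_norm_eq_inner inner_sum_left inner_sum_right) (rule sum.swap)
    also have "\<dots> = (\<Sum>j\<in>J. \<Sum>k\<in>J. \<Sum>b\<in>Basis. (u (y j) \<bullet> b) * (u (y k) \<bullet> b))"
      by (intro sum.cong refl) (rule euclidean_inner)
    finally show ?thesis .
  qed
  have ti: "\<And>j k b. j \<in> J \<Longrightarrow> k \<in> J \<Longrightarrow> b \<in> Basis \<Longrightarrow> integrable ?M (\<lambda>y. (u (y j) \<bullet> b) * (u (y k) \<bullet> b))"
    using trm by blast
  have integ: "integrable ?M (\<lambda>y. \<Sum>j\<in>J. \<Sum>k\<in>J. \<Sum>b\<in>Basis. (u (y j) \<bullet> b) * (u (y k) \<bullet> b))"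
    by (simp add: ti integrable_sum)
  then show "integrable ?M (\<lambda>y. (norm (\<Sum>j\<in>J. u (y j)))\<^sup>2)" by (simp only: expand)
  have "(\<integral>y. (norm (\<Sum>j\<in>J. u (y j)))\<^sup>2 \<partial>?M) =
        (\<Sum>j\<in>J. \<Sum>k\<in>J. \<Sum>b\<in>Basis. (\<integral>y. (u (y j) \<bullet> b) * (u (y k) \<bullet> b) \<partial>?M))"
  proof -
    have "(\<integral>y. (\<Sum>j\<in>J. \<Sum>k\<in>J. \<Sum>b\<in>Basis. (u (y j) \<bullet> b) * (u (y k) \<bullet> b)) \<partial>?M)
       = (\<Sum>j\<in>J. (\<integral>y. (\<Sum>k\<in>J. \<Sum>b\<in>Basis. (u (y j) \<bullet> b) * (u (y k) \<bullet> b)) \<partial>?M))"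
      by (simp add: ti integrable_sum integral_sum)
    also have "\<dots> = (\<Sum>j\<in>J. \<Sum>k\<in>J. \<Sum>b\<in>Basis. (\<integral>y. (u (y j) \<bullet> b) * (u (y k) \<bullet> b) \<partial>?M))"
      by (simp add: ti integrable_sum integral_sum)
    finally show ?thesis unfolding expand .
  qed
  also have "\<dots> = (\<Sum>j\<in>J. \<Sum>k\<in>J. \<Sum>b\<in>Basis. (if j = k then (\<integral>x. (u x \<bullet> b)\<^sup>2 \<partial>X) else 0))"
    using trm by (intro sum.cong refl) blast
  also have "\<dots> = (\<Sum>j\<in>J. \<Sum>b\<in>Basis. (\<integral>x. (u x \<bullet> b)\<^sup>2 \<partial>X))"
    by (intro sum.cong refl) (subst sum.swap, simp add: J)
  also have "(\<Sum>b\<in>Basis. (\<integral>x. (u x \<bullet> b)\<^sup>2 \<partial>X)) = (\<integral>x. (norm (u x))\<^sup>2 \<partial>X)"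
  proof -
    have "(\<Sum>b\<in>Basis. (\<integral>x. (u x \<bullet> b)\<^sup>2 \<partial>X)) = (\<integral>x. (\<Sum>b\<in>Basis. (u x \<bullet> b)\<^sup>2) \<partial>X)"
      using ub2 by (simp add: integral_sum)
    also have "\<dots> = (\<integral>x. (norm (u x))\<^sup>2 \<partial>X)"
      by (intro Bochner_Integration.integral_cong refl) (simp add: power2_norm_eq_inner euclidean_inner[of "u _" "u _", symmetric] power2_eq_square, metis power2_eq_square power2_norm_eq_inner)
    finally show ?thesis .
  qed
  finally show "(\<integral>y. (norm (\<Sum>j\<in>J. u (y j)))\<^sup>2 \<partial>?M) = real (card J) * (\<integral>x. (norm (u x))\<^sup>2 \<partial>X)"
    by simp
qed

lemma alg1:
  fixes g U :: "'a::real_inner"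
  shows "g \<bullet> (- (\<eta> *\<^sub>R (s *\<^sub>R g + U))) = - \<eta> * (s * (norm g)\<^sup>2 + g \<bullet> U)"
    and "(norm (- (\<eta> *\<^sub>R (s *\<^sub>R g + U))))\<^sup>2 = \<eta>\<^sup>2 * (s\<^sup>2 * (norm g)\<^sup>2 + 2 * s * (g \<bullet> U) + (norm U)\<^sup>2)"
proof -
  show "g \<bullet> (- (\<eta> *\<^sub>R (s *\<^sub>R g + U))) = - \<eta> * (s * (norm g)\<^sup>2 + g \<bullet> U)"
    by (simp add: inner_add_right power2_norm_eq_inner algebra_simps)
  have "(norm (- (\<eta> *\<^sub>R (s *\<^sub>R g + U))))\<^sup>2 = \<eta>\<^sup>2 * (norm (s *\<^sub>R g + U))\<^sup>2"
    by (simp add: power_mult_distrib)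
  also have "(norm (s *\<^sub>R g + U))\<^sup>2 = s\<^sup>2 * (norm g)\<^sup>2 + 2 * s * (g \<bullet> U) + (norm U)\<^sup>2"
    unfolding power2_norm_eq_inner by (simp add: inner_add_left inner_add_right inner_commute[of U g] algebra_simps power2_eq_square)
  finally show "(norm (- (\<eta> *\<^sub>R (s *\<^sub>R g + U))))\<^sup>2 = \<eta>\<^sup>2 * (s\<^sup>2 * (norm g)\<^sup>2 + 2 * s * (g \<bullet> U) + (norm U)\<^sup>2)" .
qed

lemma one_step:
  fixes gf :: "'a::euclidean_space \<Rightarrow> 'b \<Rightarrow> 'a" and F :: "'a \<Rightarrow> real" and gF :: "'a \<Rightarrow> 'a"
  assumes X: "prob_space X"
    and gf_int: "\<And>w. integrable X (gf w)"
    and unbiased: "\<And>w. (\<integral> x. gf w x \<partial>X) = gF w"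
    and bounded_var: "\<And>w. sigma_g2 X gf w \<le> ennreal V"
    and F_diff: "\<And>w. (F has_derivative (\<lambda>h. gF w \<bullet> h)) (at w)"
    and smooth: "\<And>w w'. norm (gF w - gF w') \<le> \<beta> * norm (w - w')"
    and \<beta>_pos: "\<beta> > 0" and V0: "0 \<le> V"
    and PL: "\<And>w. F w - Fstar \<le> 1 / (2 * \<alpha>) * (norm (gF w))\<^sup>2"
    and Fmin: "\<forall>w. Fstar \<le> F w"
    and \<alpha>_pos: "\<alpha> > 0"
    and J: "finite J" and cJ: "card J = S" and S_pos: "S > 0"
    and \<eta>_pos: "\<eta> > 0" and \<eta>_bound: "\<eta> < 2 / (real S * \<beta>)"
  shows "(\<integral>\<^sup>+y. ennreal (F (w - (real S * \<eta>) *\<^sub>R ((1 / real S) *\<^sub>R (\<Sum>j\<in>J. gf w (y j)))) - Fstar)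
            \<partial>PiM J (\<lambda>_. X))
         \<le> ennreal ((1 - real S * \<eta> * \<alpha> * (2 - real S * \<eta> * \<beta>)) * (F w - Fstar)
                    + \<beta> * real S * \<eta>\<^sup>2 * V / 2)"
proof -
  interpret Xp: prob_space X by (rule X)
  interpret P: prob_space "PiM J (\<lambda>_. X)" by (rule PiM_prob_space[OF X])
  let ?M = "PiM J (\<lambda>_. X)"
  define g where "g = gF w"
  define u where "u x = gf w x - g" for x
  define U where "U y = (\<Sum>j\<in>J. u (y j))" for y
  have ui: "integrable X u" unfolding u_def using gf_int[of w] by simp
  have u0: "(\<integral>x. u x \<partial>X) = 0" unfolding u_def using gf_int[of w]
    by (simp add: unbiased g_def Xp.prob_space)
  have nn: "(\<integral>\<^sup>+x. ennreal ((norm (u x))\<^sup>2) \<partial>X) \<le> ennreal V"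
    using bounded_var[of w] unfolding sigma_g2_def u_def g_def unbiased .
  have nui: "integrable X (\<lambda>x. (norm (u x))\<^sup>2)"
    by (rule integrableI_nonneg) (use ui nn in \<open>auto simp: top_unique intro: le_less_trans\<close>)
  have nuV: "(\<integral>x. (norm (u x))\<^sup>2 \<partial>X) \<le> V"
  proof -
    have "ennreal (\<integral>x. (norm (u x))\<^sup>2 \<partial>X) \<le> ennreal V"
      using nn by (subst nn_integral_eq_integral[OF nui, symmetric]) auto
    then show ?thesis using V0 by (simp add: ennreal_le_iff)
  qed
  have VS: "integrable ?M (\<lambda>y. (norm (U y))\<^sup>2)" "(\<integral>y. (norm (U y))\<^sup>2 \<partial>?M) = real S * (\<integral>x. (norm (u x))\<^sup>2 \<partial>X)"
    using var_sum[OF X ui u0 nui J] cJ unfolding U_def by auto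
  have gui: "integrable X (\<lambda>x. g \<bullet> u x)" using ui by auto
  have gu0: "(\<integral>x. g \<bullet> u x \<partial>X) = 0" using ui u0 by simp
  have gUj: "integrable ?M (\<lambda>y. g \<bullet> u (y j)) \<and> (\<integral>y. g \<bullet> u (y j) \<partial>?M) = 0" if "j \<in> J" for j
    using PiM_comp[OF X gui that] gu0 by simp
  have gUe: "(\<lambda>y. g \<bullet> U y) = (\<lambda>y. \<Sum>j\<in>J. g \<bullet> u (y j))" unfolding U_def by (simp add: inner_sum_right)
  have gUi: "integrable ?M (\<lambda>y. g \<bullet> U y)" unfolding gUe using gUj by (simp add: integrable_sum)
  have gU0: "(\<integral>y. g \<bullet> U y \<partial>?M) = 0" unfolding gUe using gUj by (simp add: integral_sum integrable_sum)
  have step: "w - (real S * \<eta>) *\<^sub>R ((1 / real S) *\<^sub>R (\<Sum>j\<in>J. gf w (y j))) = w + - (\<eta> *\<^sub>R (real S *\<^sub>R g + U y))" for y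
  proof -
    have "(\<Sum>j\<in>J. gf w (y j)) = (\<Sum>j\<in>J. g + u (y j))" unfolding u_def by simp
    also have "\<dots> = real S *\<^sub>R g + U y" unfolding U_def using cJ by (simp add: sum.distrib sum_constant_scaleR)
    finally show ?thesis using S_pos by simp
  qed
  define A where "A = F w - Fstar - \<eta> * real S * (norm g)\<^sup>2 + \<beta> / 2 * \<eta>\<^sup>2 * (real S)\<^sup>2 * (norm g)\<^sup>2"
  define B where "B = \<beta> * \<eta>\<^sup>2 * real S - \<eta>"
  define D where "D = \<beta> / 2 * \<eta>\<^sup>2"
  have pw: "F (w - (real S * \<eta>) *\<^sub>R ((1 / real S) *\<^sub>R (\<Sum>j\<in>J. gf w (y j)))) - Fstar \<le> A + B * (g \<bullet> U y) + D * (norm (U y))\<^sup>2" for y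
  proof -
    have "F (w + - (\<eta> *\<^sub>R (real S *\<^sub>R g + U y))) \<le> F w + g \<bullet> (- (\<eta> *\<^sub>R (real S *\<^sub>R g + U y))) + \<beta> / 2 * (norm (- (\<eta> *\<^sub>R (real S *\<^sub>R g + U y))))\<^sup>2"
      using descent[OF F_diff smooth, where v = "w + - (\<eta> *\<^sub>R (real S *\<^sub>R g + U y))" and w = w] \<beta>_pos
      unfolding g_def by (simp only: add_diff_cancel_left' less_imp_le)
    then show ?thesis unfolding step alg1 A_def B_def D_def by (simp add: algebra_simps power2_eq_square)
  qed
  have pw0: "0 \<le> F (w - (real S * \<eta>) *\<^sub>R ((1 / real S) *\<^sub>R (\<Sum>j\<in>J. gf w (y j)))) - Fstar" for y
    using Fmin by simp
  have hi: "integrable ?M (\<lambda>y. A + B * (g \<bullet> U y) + D * (norm (U y))\<^sup>2)"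
    using gUi VS by auto
  have hint: "(\<integral>y. A + B * (g \<bullet> U y) + D * (norm (U y))\<^sup>2 \<partial>?M) = A + D * (real S * (\<integral>x. (norm (u x))\<^sup>2 \<partial>X))"
    using gUi VS gU0 by (simp add: Bochner_Integration.integral_add P.prob_space)
  have "(\<integral>\<^sup>+y. ennreal (F (w - (real S * \<eta>) *\<^sub>R ((1 / real S) *\<^sub>R (\<Sum>j\<in>J. gf w (y j)))) - Fstar) \<partial>?M)
      \<le> (\<integral>\<^sup>+y. ennreal (A + B * (g \<bullet> U y) + D * (norm (U y))\<^sup>2) \<partial>?M)"
    by (intro nn_integral_mono ennreal_leI pw)
  also have "\<dots> = ennreal (A + D * (real S * (\<integral>x. (norm (u x))\<^sup>2 \<partial>X)))"
    using hi by (subst nn_integral_eq_integral) (auto intro: order.trans[OF pw0 pw] simp: hint)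
  also have "\<dots> \<le> ennreal ((1 - real S * \<eta> * \<alpha> * (2 - real S * \<eta> * \<beta>)) * (F w - Fstar)
                    + \<beta> * real S * \<eta>\<^sup>2 * V / 2)"
  proof (rule ennreal_leI)
    have sb: "real S * \<eta> * \<beta> < 2" using \<eta>_bound S_pos \<beta>_pos by (simp add: field_simps)
    have k0: "0 \<le> \<eta> * real S * (1 - \<eta> * real S * \<beta> / 2)" proof -
      have "0 \<le> 1 - \<eta> * real S * \<beta> / 2" using sb by (simp add: mult.commute mult.left_commute)
      then show ?thesis using \<eta>_pos by simp
    qed
    have pl: "2 * \<alpha> * (F w - Fstar) \<le> (norm g)\<^sup>2" using PL[of w] \<alpha>_pos unfolding g_def by (simp add: field_simps)
    have "A = (F w - Fstar) - \<eta> * real S * (1 - \<eta> * real S * \<beta> / 2) * (norm g)\<^sup>2"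
      unfolding A_def by (simp add: algebra_simps power2_eq_square)
    also have "\<dots> \<le> (F w - Fstar) - \<eta> * real S * (1 - \<eta> * real S * \<beta> / 2) * (2 * \<alpha> * (F w - Fstar))"
      using mult_left_mono[OF pl k0] by linarith
    finally have a: "A \<le> (1 - real S * \<eta> * \<alpha> * (2 - real S * \<eta> * \<beta>)) * (F w - Fstar)"
      by (simp add: algebra_simps)
    have d: "D * (real S * (\<integral>x. (norm (u x))\<^sup>2 \<partial>X)) \<le> \<beta> * real S * \<eta>\<^sup>2 * V / 2"
      proof -
      have "\<beta> / 2 * \<eta>\<^sup>2 * real S \<ge> 0" using \<beta>_pos by simp
      from mult_left_mono[OF nuV this] show ?thesis unfolding D_def by (simp add: algebra_simps)
    qed
    show "A + D * (real S * (\<integral>x. (norm (u x))\<^sup>2 \<partial>X)) \<le> (1 - real S * \<eta> * \<alpha> * (2 - real S * \<eta> * \<beta>)) * (F w - Fstar)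
                    + \<beta> * real S * \<eta>\<^sup>2 * V / 2" using a d by linarith
  qed
  finally show ?thesis .
qed

lemma sgd_agree:
  assumes "\<And>s i. s < t \<Longrightarrow> i < S \<Longrightarrow> \<omega> (s, i) = \<omega>' (s, i)"
  shows "scaled_sgd gf S lr w0 \<omega> t = scaled_sgd gf S lr w0 \<omega>' t"
  using assms by (induction t) (auto simp: Let_def)

lemma sgd_meas:
  fixes gf :: "'a::euclidean_space \<Rightarrow> 'b \<Rightarrow> 'a"
  assumes gf_meas: "(\<lambda>(w, x). gf w x) \<in> borel_measurable (borel \<Otimes>\<^sub>M X)"
    and K: "{..<t} \<times> {..<S} \<subseteq> K"
  shows "(\<lambda>\<omega>. scaled_sgd gf S lr w0 \<omega> t) \<in> borel_measurable (PiM K (\<lambda>_. X))"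
  using K
proof (induction t)
  case 0 then show ?case by simp
next
  case (Suc t)
  have IH[measurable]: "(\<lambda>\<omega>. scaled_sgd gf S lr w0 \<omega> t) \<in> borel_measurable (PiM K (\<lambda>_. X))"
  proof (rule Suc.IH)
    show "{..<t} \<times> {..<S} \<subseteq> K" using Suc.prems by (auto simp: subset_iff)
  qed
  have g[measurable]: "(\<lambda>\<omega>. gf (scaled_sgd gf S lr w0 \<omega> t) (\<omega> (t, i))) \<in> borel_measurable (PiM K (\<lambda>_. X))"
    if "i < S" for i
  proof -
    have c: "(\<lambda>\<omega>. \<omega> (t, i)) \<in> PiM K (\<lambda>_. X) \<rightarrow>\<^sub>M X"
      using Suc.prems that by (intro measurable_component_singleton) auto
    have "(\<lambda>\<omega>. (scaled_sgd gf S lr w0 \<omega> t, \<omega> (t, i))) \<in> PiM K (\<lambda>_. X) \<rightarrow>\<^sub>M borel \<Otimes>\<^sub>M X"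
      using IH c by (rule measurable_Pair)
    from measurable_compose[OF this gf_meas] show ?thesis by simp
  qed
  show ?case by (simp add: Let_def)
qed

locale sgd_ctx =
  fixes X :: "'b measure" and gf :: "'a::euclidean_space \<Rightarrow> 'b \<Rightarrow> 'a" and F :: "'a \<Rightarrow> real"
    and gF :: "'a \<Rightarrow> 'a" and V \<beta> \<alpha> Fstar \<eta> :: real and S T :: nat and w0 :: 'a
  assumes X: "prob_space X"
    and gf_int: "\<And>w. integrable X (gf w)"
    and unbiased: "\<And>w. (\<integral> x. gf w x \<partial>X) = gF w"
    and bounded_var: "\<And>w. sigma_g2 X gf w \<le> ennreal V"
    and F_diff: "\<And>w. (F has_derivative (\<lambda>h. gF w \<bullet> h)) (at w)"
    and smooth: "\<And>w w'. norm (gF w - gF w') \<le> \<beta> * norm (w - w')"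
    and \<beta>_pos: "\<beta> > 0" and V0: "0 \<le> V"
    and PL: "\<And>w. F w - Fstar \<le> 1 / (2 * \<alpha>) * (norm (gF w))\<^sup>2"
    and Fmin: "\<forall>w. Fstar \<le> F w"
    and \<alpha>_pos: "\<alpha> > 0"
    and S_pos: "S > 0"
    and \<eta>_pos: "\<eta> > 0" and \<eta>_bound: "\<eta> < 2 / (real S * \<beta>)"
    and gf_meas: "(\<lambda>(w, x). gf w x) \<in> borel_measurable (borel \<Otimes>\<^sub>M X)"
begin

definition "q = 1 - real S * \<eta> * \<alpha> * (2 - real S * \<eta> * \<beta>)"
definition "C = \<beta> * real S * \<eta>\<^sup>2 * V / 2"
abbreviation "W \<omega> t \<equiv> scaled_sgd gf S (\<lambda>t. real S * \<eta>) w0 \<omega> t"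
definition "E t = (\<integral>\<^sup>+\<omega>. ennreal (F (W \<omega> t) - Fstar) \<partial>batches T S X)"

lemma F_meas[measurable]: "F \<in> borel_measurable borel"
proof (rule borel_measurable_continuous_onI)
  show "continuous_on UNIV F"
    using F_diff has_derivative_continuous continuous_at_imp_continuous_on by blast
qed

lemma C_nonneg: "0 \<le> C" unfolding C_def using \<beta>_pos V0 by simp

lemma main_step:
  assumes tT: "t < T" and q0: "0 \<le> q"
  shows "E (Suc t) \<le> ennreal q * E t + ennreal C"
proof -
  interpret PS: product_prob_space "\<lambda>_. X" UNIV using PiM_prob[OF X] .
  define J where "J = {t} \<times> {..<S}"
  define I where "I = {..<T} \<times> {..<S} - J"
  have IJ: "I \<inter> J = {}" "finite I" "finite J" unfolding I_def J_def by auto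
  have K: "I \<union> J = {..<T} \<times> {..<S}" unfolding I_def J_def using tT by auto
  have B: "batches T S X = PiM (I \<union> J) (\<lambda>_. X)" unfolding batches_def K ..
  have Jimg: "J = Pair t ` {..<S}" unfolding J_def by auto
  have injP: "inj_on (Pair t) {..<S}" by (auto simp: inj_on_def)
  have cJ: "card J = S" unfolding Jimg using injP by (simp add: card_image)
  have agr: "W (merge I J (x, y)) t = W x t" for x y
    by (rule sgd_agree) (use tT in \<open>auto simp: merge_def I_def J_def\<close>)
  have mt: "merge I J (x, y) (t, i) = y (t, i)" if "i < S" for x y i
    using that by (auto simp: merge_def I_def J_def)
  have Wsuc: "W (merge I J (x, y)) (Suc t) =
      W x t - (real S * \<eta>) *\<^sub>R ((1 / real S) *\<^sub>R (\<Sum>j\<in>J. gf (W x t) (y j)))" for x y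
  proof -
    have "(\<Sum>i<S. gf (W x t) (merge I J (x, y) (t, i))) = (\<Sum>i<S. gf (W x t) (y (t, i)))"
      by (intro sum.cong refl) (auto simp: merge_def I_def J_def)
    also have "\<dots> = (\<Sum>j\<in>J. gf (W x t) (y j))" unfolding Jimg using injP by (simp add: sum.reindex)
    finally show ?thesis by (simp add: Let_def agr)
  qed
  have mK: "(\<lambda>\<omega>. ennreal (F (W \<omega> t') - Fstar)) \<in> borel_measurable (PiM L (\<lambda>_. X))"
    if "{..<t'} \<times> {..<S} \<subseteq> L" for t' L
  proof -
    have [measurable]: "(\<lambda>\<omega>. W \<omega> t') \<in> borel_measurable (PiM L (\<lambda>_. X))"
      by (rule sgd_meas[OF gf_meas that])
    show ?thesis by measurable
  qed
  have m1: "(\<lambda>\<omega>. ennreal (F (W \<omega> (Suc t)) - Fstar)) \<in> borel_measurable (PiM (I \<union> J) (\<lambda>_. X))"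
    by (rule mK) (use tT in \<open>auto simp: K\<close>)
  have m0: "(\<lambda>\<omega>. ennreal (F (W \<omega> t) - Fstar)) \<in> borel_measurable (PiM (I \<union> J) (\<lambda>_. X))"
    by (rule mK) (use tT in \<open>auto simp: K\<close>)
  have mI: "(\<lambda>\<omega>. ennreal (F (W \<omega> t) - Fstar)) \<in> borel_measurable (PiM I (\<lambda>_. X))"
    by (rule mK) (use tT in \<open>auto simp: I_def J_def\<close>)
  interpret PJ: prob_space "PiM J (\<lambda>_. X)" by (rule PiM_prob_space[OF X])
  have "E (Suc t) = (\<integral>\<^sup>+x. (\<integral>\<^sup>+y. ennreal (F (W (merge I J (x, y)) (Suc t)) - Fstar) \<partial>PiM J (\<lambda>_. X)) \<partial>PiM I (\<lambda>_. X))"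
    unfolding E_def B by (rule PS.product_nn_integral_fold[OF IJ m1])
  also have "\<dots> \<le> (\<integral>\<^sup>+x. ennreal (q * (F (W x t) - Fstar) + C) \<partial>PiM I (\<lambda>_. X))"
  proof (rule nn_integral_mono)
    fix x
    show "(\<integral>\<^sup>+y. ennreal (F (W (merge I J (x, y)) (Suc t)) - Fstar) \<partial>PiM J (\<lambda>_. X)) \<le> ennreal (q * (F (W x t) - Fstar) + C)"
      unfolding Wsuc q_def C_def
      by (rule one_step[OF X gf_int unbiased bounded_var F_diff smooth \<beta>_pos V0 PL Fmin \<alpha>_pos IJ(3) cJ S_pos \<eta>_pos \<eta>_bound])
  qed
  also have "\<dots> = (\<integral>\<^sup>+x. ennreal q * ennreal (F (W x t) - Fstar) + ennreal C \<partial>PiM I (\<lambda>_. X))"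
    using q0 C_nonneg Fmin by (intro nn_integral_cong) (simp add: ennreal_mult ennreal_plus[symmetric])
  also have "\<dots> = ennreal q * (\<integral>\<^sup>+x. ennreal (F (W x t) - Fstar) \<partial>PiM I (\<lambda>_. X)) + ennreal C"
  proof -
    interpret PI: prob_space "PiM I (\<lambda>_. X)" by (rule PiM_prob_space[OF X])
    show ?thesis using mI by (simp add: nn_integral_add nn_integral_cmult PI.emeasure_space_1)
  qed
  also have "(\<integral>\<^sup>+x. ennreal (F (W x t) - Fstar) \<partial>PiM I (\<lambda>_. X)) = E t"
  proof -
    have "E t = (\<integral>\<^sup>+x. (\<integral>\<^sup>+y. ennreal (F (W (merge I J (x, y)) t) - Fstar) \<partial>PiM J (\<lambda>_. X)) \<partial>PiM I (\<lambda>_. X))"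
      unfolding E_def B by (rule PS.product_nn_integral_fold[OF IJ m0])
    also have "\<dots> = (\<integral>\<^sup>+x. ennreal (F (W x t) - Fstar) \<partial>PiM I (\<lambda>_. X))"
      by (simp add: agr PJ.emeasure_space_1)
    finally show ?thesis by simp
  qed
  finally show ?thesis .
qed

lemma E0: "E 0 = ennreal (F w0 - Fstar)"
proof -
  interpret PB: prob_space "batches T S X" unfolding batches_def by (rule PiM_prob_space[OF X])
  show ?thesis unfolding E_def by (simp add: PB.emeasure_space_1)
qed

lemma iter:
  assumes q0: "0 \<le> q"
  shows "t \<le> T \<Longrightarrow> E t \<le> ennreal (q ^ t * (F w0 - Fstar) + C * (\<Sum>k<t. q ^ k))"
proof (induction t)
  case 0 then show ?case by (simp add: E0)
next
  case (Suc t)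
  have e0: "0 \<le> F w0 - Fstar" using Fmin by simp
  have a0: "0 \<le> q ^ t * (F w0 - Fstar) + C * (\<Sum>k<t. q ^ k)"
    using q0 e0 C_nonneg by (simp add: sum_nonneg)
  have "E (Suc t) \<le> ennreal q * E t + ennreal C" using main_step[OF _ q0] Suc.prems by simp
  also have "\<dots> \<le> ennreal q * ennreal (q ^ t * (F w0 - Fstar) + C * (\<Sum>k<t. q ^ k)) + ennreal C"
    using Suc by (intro add_mono mult_left_mono) auto
  also have "\<dots> = ennreal (q * (q ^ t * (F w0 - Fstar) + C * (\<Sum>k<t. q ^ k)) + C)"
    using q0 a0 C_nonneg by (simp add: ennreal_mult ennreal_plus)
  also have "q * (q ^ t * (F w0 - Fstar) + C * (\<Sum>k<t. q ^ k)) + C = q ^ Suc t * (F w0 - Fstar) + C * (\<Sum>k<Suc t. q ^ k)"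
    unfolding sum.lessThan_Suc_shift by (simp add: sum_distrib_left algebra_simps del: sum.lessThan_Suc)
  finally show ?case .
qed

end

theorem theorem3:
  fixes X :: "'b measure"
    and f :: "'a::euclidean_space \<Rightarrow> 'b \<Rightarrow> real"
    and gf :: "'a \<Rightarrow> 'b \<Rightarrow> 'a"
    and F :: "'a \<Rightarrow> real"
    and gF :: "'a \<Rightarrow> 'a"
    and \<alpha> \<beta> V Fstar \<eta> :: real
    and S T :: nat
    and w0 :: 'a
  assumes X: "prob_space X"
    and f_int: "\<And>w. integrable X (f w)"
    and F_def: "\<And>w. F w = (\<integral> x. f w x \<partial>X)"
    and f_diff: "\<And>w x. x \<in> space X \<Longrightarrow> ((\<lambda>v. f v x) has_derivative (\<lambda>h. gf w x \<bullet> h)) (at w)"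
    and F_diff: "\<And>w. (F has_derivative (\<lambda>h. gF w \<bullet> h)) (at w)"
    and gf_meas: "(\<lambda>(w, x). gf w x) \<in> borel_measurable (borel \<Otimes>\<^sub>M X)"
    and gf_int: "\<And>w. integrable X (gf w)"
    and unbiased: "\<And>w. (\<integral> x. gf w x \<partial>X) = gF w"
    and Fstar_min: "\<forall>w. Fstar \<le> F w" "\<exists>w. F w = Fstar"
    and \<alpha>_pos: "\<alpha> > 0"
    and PL: "\<And>w. F w - Fstar \<le> 1 / (2 * \<alpha>) * (norm (gF w))\<^sup>2"
    and \<beta>_pos: "\<beta> > 0"
    and smooth: "\<And>w w'. norm (gF w - gF w') \<le> \<beta> * norm (w - w')"
    and V_nonneg: "V \<ge> 0"
    and bounded_var: "\<And>w. sigma_g2 X gf w \<le> ennreal V"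
    and S_pos: "S > 0"
    and \<eta>_pos: "\<eta> > 0"
    and \<eta>_bound: "\<eta> < 2 / (real S * \<beta>)"
  shows "let \<gamma> = \<eta> * \<alpha> * (2 - \<eta> * \<beta>);
             \<Delta> = 1 / (2 * \<gamma>) * \<eta>\<^sup>2 * \<beta> * V;
             \<xi> = (2 - \<eta> * \<beta>) / (2 - real S * \<eta> * \<beta>)
         in (\<integral>\<^sup>+ \<omega>. ennreal (F (scaled_sgd gf S (\<lambda>t. real S * \<eta>) w0 \<omega> T) - Fstar)
               \<partial>batches T S X)
            \<le> ennreal ((1 - \<gamma> / \<xi>) ^ (S * T) * (F w0 - Fstar) + \<xi> * \<Delta>)"
proof -
  interpret sgd_ctx X gf F gF V \<beta> \<alpha> Fstar \<eta> S T w0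
    by (rule sgd_ctx.intro; (fact X gf_int unbiased bounded_var F_diff smooth \<beta>_pos V_nonneg PL \<alpha>_pos S_pos \<eta>_pos \<eta>_bound gf_meas Fstar_min(1))?)
  have LHS: "(\<integral>\<^sup>+ \<omega>. ennreal (F (scaled_sgd gf S (\<lambda>t. real S * \<eta>) w0 \<omega> T) - Fstar) \<partial>batches T S X) = E T"
    unfolding E_def ..
  define \<gamma> where "\<gamma> = \<eta> * \<alpha> * (2 - \<eta> * \<beta>)"
  define \<Delta> where "\<Delta> = 1 / (2 * \<gamma>) * \<eta>\<^sup>2 * \<beta> * V"
  define \<xi> where "\<xi> = (2 - \<eta> * \<beta>) / (2 - real S * \<eta> * \<beta>)"
  have e0: "0 \<le> F w0 - Fstar" using Fstar_min by simp
  have sb: "real S * \<eta> * \<beta> < 2" using \<eta>_bound S_pos \<beta>_pos by (simp add: field_simps)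
  have S1: "1 \<le> real S" using S_pos by simp
  have eb: "\<eta> * \<beta> < 2"
  proof -
    have "\<eta> * \<beta> \<le> real S * \<eta> * \<beta>" using S1 \<eta>_pos \<beta>_pos by simp
    then show ?thesis using sb by linarith
  qed
  have rhs0: "0 \<le> \<xi> * \<Delta>"
    unfolding \<xi>_def \<Delta>_def \<gamma>_def using sb eb \<eta>_pos \<alpha>_pos \<beta>_pos V_nonneg by simp
  have main: "E T \<le> ennreal ((1 - \<gamma> / \<xi>) ^ (S * T) * (F w0 - Fstar) + \<xi> * \<Delta>)"
  proof (cases "\<forall>w. gF w = 0")
    case True
    have "F w - Fstar \<le> 0" for w using PL[of w] True by simp
    then have "E T = 0" unfolding E_def by (simp add: ennreal_neg)
    then show ?thesis by simp
  next
    case False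
    then obtain w where gw: "gF w \<noteq> 0" by blast
    have ab: "\<alpha> \<le> \<beta>"
    proof -
      define g where "g = gF w"
      have d: "F (w - (1 / \<beta>) *\<^sub>R g) \<le> F w + gF w \<bullet> ((w - (1 / \<beta>) *\<^sub>R g) - w) + \<beta> / 2 * (norm ((w - (1 / \<beta>) *\<^sub>R g) - w))\<^sup>2"
        by (rule descent[OF F_diff smooth]) (use \<beta>_pos in simp)
      have "(w - (1 / \<beta>) *\<^sub>R g) - w = - ((1 / \<beta>) *\<^sub>R g)" by simp
      then have d2: "F (w - (1 / \<beta>) *\<^sub>R g) \<le> F w - (norm g)\<^sup>2 / (2 * \<beta>)"
        using d \<beta>_pos unfolding g_def[symmetric]
        by (simp add: power2_norm_eq_inner[symmetric] power_mult_distrib power2_eq_square field_simps)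
      have n0: "(norm g)\<^sup>2 > 0" using gw unfolding g_def by simp
      have "(norm g)\<^sup>2 / (2 * \<beta>) \<le> F w - Fstar" using d2 Fstar_min(1) by (smt (verit))
      also have "\<dots> \<le> (norm g)\<^sup>2 / (2 * \<alpha>)" using PL[of w] unfolding g_def by simp
      finally have "(norm g)\<^sup>2 / (2 * \<beta>) \<le> (norm g)\<^sup>2 / (2 * \<alpha>)" .
      then have "1 / \<beta> \<le> 1 / \<alpha>" using n0 \<alpha>_pos \<beta>_pos by (simp add: field_simps)
      then show ?thesis using \<alpha>_pos \<beta>_pos by (simp add: field_simps)
    qed
    define \<rho> where "\<rho> = \<eta> * \<alpha> * (2 - real S * \<eta> * \<beta>)"
    have \<rho>0: "0 < \<rho>" unfolding \<rho>_def using \<eta>_pos \<alpha>_pos sb by simp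
    have qdef: "q = 1 - real S * \<rho>" unfolding q_def \<rho>_def by (simp add: algebra_simps)
    have q0: "0 \<le> q"
    proof -
      have "real S * \<rho> \<le> real S * \<eta> * \<beta> * (2 - real S * \<eta> * \<beta>)"
        unfolding \<rho>_def using ab sb \<eta>_pos S_pos by (simp add: mult_left_mono mult_right_mono)
      also have "\<dots> \<le> 1"
      proof -
        have "0 \<le> (real S * \<eta> * \<beta> - 1)\<^sup>2" by simp
        then show ?thesis by (simp add: power2_eq_square algebra_simps)
      qed
      finally show ?thesis unfolding qdef by simp
    qed
    have q1: "q < 1" unfolding qdef using \<rho>0 S_pos by simp
    have gx: "\<gamma> / \<xi> = \<rho>"
      unfolding \<gamma>_def \<xi>_def \<rho>_def using eb sb by (simp add: field_simps)
    have "E T \<le> ennreal (q ^ T * (F w0 - Fstar) + C * (\<Sum>k<T. q ^ k))"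
      by (rule iter[OF q0]) simp
    also have "\<dots> \<le> ennreal ((1 - \<gamma> / \<xi>) ^ (S * T) * (F w0 - Fstar) + \<xi> * \<Delta>)"
    proof (rule ennreal_leI)
      have b1: "q \<le> (1 - \<rho>) ^ S"
      proof -
        have "real S * \<rho> \<le> 1" using q0 qdef by simp
        then have "\<rho> \<le> 1" using S1 \<rho>0 by (smt (verit) mult_le_cancel_right1)
        then have "1 + real S * (- \<rho>) \<le> (1 + - \<rho>) ^ S" by (intro Bernoulli_inequality) simp
        then show ?thesis unfolding qdef by simp
      qed
      have p1: "q ^ T \<le> (1 - \<gamma> / \<xi>) ^ (S * T)"
        unfolding gx power_mult using power_mono[OF b1 q0] .
      have s1: "(\<Sum>k<T. q ^ k) \<le> 1 / (1 - q)"
      proof -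
        have "(\<Sum>k<T. q ^ k) = (1 - q ^ T) / (1 - q)" using q1 by (simp add: sum_gp_strict)
        also have "\<dots> \<le> 1 / (1 - q)" using q0 q1 by (simp add: divide_right_mono)
        finally show ?thesis .
      qed
      have cx: "C / (1 - q) = \<xi> * \<Delta>"
      proof -
        define a where "a = 2 - \<eta> * \<beta>"
        define b where "b = 2 - real S * \<eta> * \<beta>"
        have a0: "a > 0" "b > 0" unfolding a_def b_def using eb sb by auto
        have "C / (1 - q) = (\<beta> * real S * \<eta>\<^sup>2 * V / 2) / (real S * (\<eta> * \<alpha> * b))"
          unfolding C_def qdef \<rho>_def b_def by simp
        also have "\<dots> = (a / b) * (1 / (2 * (\<eta> * \<alpha> * a)) * \<eta>\<^sup>2 * \<beta> * V)"
          using a0 \<eta>_pos \<alpha>_pos S_pos by (simp add: field_simps power2_eq_square)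
        finally show ?thesis unfolding \<xi>_def \<Delta>_def \<gamma>_def a_def b_def .
      qed
      have "C * (\<Sum>k<T. q ^ k) \<le> C * (1 / (1 - q))" using s1 C_nonneg by (rule mult_left_mono)
      then have "C * (\<Sum>k<T. q ^ k) \<le> \<xi> * \<Delta>" using cx by simp
      moreover have "q ^ T * (F w0 - Fstar) \<le> (1 - \<gamma> / \<xi>) ^ (S * T) * (F w0 - Fstar)"
        using p1 e0 by (rule mult_right_mono)
      ultimately show "q ^ T * (F w0 - Fstar) + C * (\<Sum>k<T. q ^ k) \<le> (1 - \<gamma> / \<xi>) ^ (S * T) * (F w0 - Fstar) + \<xi> * \<Delta>"
        by linarith
    qed
    finally show ?thesis .
  qed
  show ?thesis unfolding Let_def using main unfolding LHS \<gamma>_def \<Delta>_def \<xi>_def .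
qed

end
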